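(* Let $b\ge2$ and $d\ge1$ be integers and $0<\alpha<1$ with $d<\tfrac1\alpha$. Then for every collection $\mathcal{G}=\{g_0,\dots,g_{d-1}\}$ of Lipschitz functions on $\mathbb{S}^1$, the Weierstrass embedding $\Phi^{\alpha,b}_{\mathcal{G}}\colon\mathbb{S}^1\to\mathbb{R}^d$ is not $\alpha$-bi-Hölder.
   Context: $\mathbb{S}^1$ is identified with $\mathbb{R}/\mathbb{Z}$, and functions on $\mathbb{S}^1$ are $1$-periodic functions on $\mathbb{R}$. For an integer $b\ge2$, $0<\alpha<1$ and a Lipschitz $g\colon\mathbb{S}^1\to\mathbb{R}$, $W_g^{\alpha,b}(x)=\sum_{k=0}^\infty b^{-\alpha k}g(b^kx)$. The Weierstrass embedding of $\mathcal{G}=\{g_0,\dots,g_{d-1}\}$ is $\Phi^{\alpha,b}_{\mathcal{G}}(x)=(W^{\alpha,b}_{g_0}(x),\dots,W^{\alpha,b}_{g_{d-1}}(x))$. A map $\Phi\colon\mathbb{S}^1\to\mathbb{R}^d$ is $\alpha$-bi-Hölder if there are $c_1,c_2>0$ with $c_1|x-y|^\alpha\le\|\Phi(x)-\Phi(y)\|\le c_2|x-y|^\alpha$ for all $x\ne y$ in $[0,1)$, where $\|\cdot\|$ is the $\ell^\infty$ norm. *)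

theory Defs
  imports "HOL-Analysis.Analysis"
begin

text \<open>Functions on the circle are 1-periodic functions on the reals.\<close>
definition periodic1 :: "(real \<Rightarrow> real) \<Rightarrow> bool" where
  "periodic1 g \<longleftrightarrow> (\<forall>x. g (x + 1) = g x)"

definition weierstrass :: "real \<Rightarrow> nat \<Rightarrow> (real \<Rightarrow> real) \<Rightarrow> real \<Rightarrow> real" where
  "weierstrass \<alpha> b g x = (\<Sum>k. real b powr (- \<alpha> * real k) * g (real b ^ k * x))"

definition weierstrass_embedding ::
    "real \<Rightarrow> nat \<Rightarrow> (nat \<Rightarrow> real \<Rightarrow> real) \<Rightarrow> nat \<Rightarrow> real \<Rightarrow> real" where
  "weierstrass_embedding \<alpha> b g i x = weierstrass \<alpha> b (g i) x"

definition linf_dist :: "nat \<Rightarrow> (nat \<Rightarrow> real \<Rightarrow> real) \<Rightarrow> real \<Rightarrow> real \<Rightarrow> real" where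
  "linf_dist d \<Phi> x y = Max ((\<lambda>i. \<bar>\<Phi> i x - \<Phi> i y\<bar>) ` {..<d})"

definition bi_holder :: "real \<Rightarrow> nat \<Rightarrow> (nat \<Rightarrow> real \<Rightarrow> real) \<Rightarrow> bool" where
  "bi_holder \<alpha> d \<Phi> \<longleftrightarrow> (\<exists>c1>0. \<exists>c2>0. \<forall>x\<in>{0..<1}. \<forall>y\<in>{0..<1}. x \<noteq> y \<longrightarrow>
      c1 * \<bar>x - y\<bar> powr \<alpha> \<le> linf_dist d \<Phi> x y \<and>
      linf_dist d \<Phi> x y \<le> c2 * \<bar>x - y\<bar> powr \<alpha>)"

end

theory Submission
  imports Defs
begin

lemma exists_big_N:
  fixes e B :: real
  assumes "e > 0"
  shows "\<exists>N::nat. N \<ge> 1 \<and> real N powr e > B"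
proof -
  define B' where "B' = max B 1 + 1"
  have B'pos: "B' > 0" "B' > B" unfolding B'_def by auto
  define N where "N = nat \<lceil>B' powr (1/e)\<rceil> + 1"
  have N1: "N \<ge> 1" unfolding N_def by simp
  have "B' powr (1/e) \<le> real N" unfolding N_def by linarith
  then have "(B' powr (1/e)) powr e \<le> real N powr e"
    using assms by (intro powr_mono2) auto
  moreover have "(B' powr (1/e)) powr e = B'"
    using assms B'pos by (simp add: powr_powr)
  ultimately show ?thesis using N1 B'pos by (intro exI[of _ N]) auto
qed

lemma not_bi_holder_general:
  fixes \<Phi> :: "nat \<Rightarrow> real \<Rightarrow> real"
  assumes d1: "d \<ge> 1" and a0: "0 < \<alpha>" and da: "real d * \<alpha> < 1"
  shows "\<not> bi_holder \<alpha> d \<Phi>"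
proof
  assume "bi_holder \<alpha> d \<Phi>"
  then obtain c1 c2 where c1: "c1 > 0" and c2: "c2 > 0" and
    H: "\<And>x y. x\<in>{0..<1} \<Longrightarrow> y\<in>{0..<1} \<Longrightarrow> x \<noteq> y \<Longrightarrow>
      c1 * \<bar>x - y\<bar> powr \<alpha> \<le> linf_dist d \<Phi> x y \<and>
      linf_dist d \<Phi> x y \<le> c2 * \<bar>x - y\<bar> powr \<alpha>"
    unfolding bi_holder_def by blast
  define A where "A = c2 / c1"
  have A0: "A > 0" using c1 c2 unfolding A_def by simp
  define B where "B = (2*A+4)^d"
  obtain N :: nat where N1: "N \<ge> 1" and NB: "real N powr (1 - real d * \<alpha>) > B"
    using exists_big_N[of "1 - real d * \<alpha>" B] da by auto
  have Npos: "real N > 0" using N1 by simp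
  define \<delta> where "\<delta> = c1 * real N powr (- \<alpha>)"
  have \<delta>0: "\<delta> > 0" unfolding \<delta>_def using c1 Npos by simp
  define pt where "pt j = real j / real N" for j :: nat
  have pt_in: "pt j \<in> {0..<1}" if "j < N" for j
    using that Npos unfolding pt_def by (auto simp: field_simps)
  have fin: "finite ((\<lambda>i. \<bar>\<Phi> i x - \<Phi> i y\<bar>) ` {..<d})" for x y by simp
  have ne: "((\<lambda>i. \<bar>\<Phi> i x - \<Phi> i y\<bar>) ` {..<d}) \<noteq> {}" for x y using d1 by (auto simp: lessThan_empty_iff)
  have comp_le: "\<bar>\<Phi> i x - \<Phi> i y\<bar> \<le> linf_dist d \<Phi> x y" if "i < d" for i x y
    unfolding linf_dist_def using that fin by (intro Max_ge) auto
  define L where "L = \<lceil>A * real N powr \<alpha>\<rceil>"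
  define t where "t j i = (\<Phi> i (pt j) - \<Phi> i (pt 0)) / \<delta>" for j i
  define cell where "cell j = map (\<lambda>i. \<lfloor>t j i\<rfloor>) [0..<d]" for j
  have bound: "\<bar>\<Phi> i (pt j) - \<Phi> i (pt 0)\<bar> \<le> c2" if "j < N" "i < d" for i j
  proof (cases "j = 0")
    case True then show ?thesis using c2 by simp
  next
    case False
    then have ne0: "pt j \<noteq> pt 0" using Npos unfolding pt_def by simp
    have p0: "0 < N" using N1 by simp
    have "\<bar>\<Phi> i (pt j) - \<Phi> i (pt 0)\<bar> \<le> linf_dist d \<Phi> (pt j) (pt 0)" using comp_le that by blast
    also have "\<dots> \<le> c2 * \<bar>pt j - pt 0\<bar> powr \<alpha>"
      using H[OF pt_in[OF that(1)] pt_in[OF p0] ne0] by blast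
    also have "\<bar>pt j - pt 0\<bar> powr \<alpha> \<le> 1"
    proof -
      have "\<bar>pt j - pt 0\<bar> \<le> 1" using pt_in[OF that(1)] by (simp add: pt_def)
      then have "\<bar>pt j - pt 0\<bar> powr \<alpha> \<le> 1 powr \<alpha>" using a0 by (intro powr_mono2) auto
      then show ?thesis by simp
    qed
    then have "c2 * \<bar>pt j - pt 0\<bar> powr \<alpha> \<le> c2" using c2 by (simp add: mult_left_le)
    finally show ?thesis .
  qed
  have c2d: "c2 / \<delta> = A * real N powr \<alpha>"
    unfolding A_def \<delta>_def using c1 Npos by (simp add: powr_minus field_simps)
  have tb: "\<bar>t j i\<bar> \<le> A * real N powr \<alpha>" if "j < N" "i < d" for i j
  proof -
    have "\<bar>t j i\<bar> = \<bar>\<Phi> i (pt j) - \<Phi> i (pt 0)\<bar> / \<delta>" unfolding t_def using \<delta>0 by (simp add: abs_divide)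
    also have "\<dots> \<le> c2 / \<delta>" using bound[OF that] \<delta>0 by (simp add: divide_right_mono)
    finally show ?thesis using c2d by simp
  qed
  define S where "S = {xs. set xs \<subseteq> {-L-1..L} \<and> length xs = d}"
  have sub: "cell ` {..<N} \<subseteq> S"
  proof
    fix c assume "c \<in> cell ` {..<N}"
    then obtain j where j: "j < N" "c = cell j" by auto
    have "\<lfloor>t j i\<rfloor> \<in> {-L-1..L}" if "i < d" for i
    proof -
      have "\<bar>t j i\<bar> \<le> A * real N powr \<alpha>" using tb j that by blast
      then have "t j i \<le> of_int L" "t j i \<ge> - of_int L" unfolding L_def
        by (smt (verit) le_of_int_ceiling)+
      then show ?thesis by (auto simp: floor_le_iff le_floor_iff)
    qed
    then show "c \<in> S" unfolding S_def j cell_def by auto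
  qed
  have inj: "inj_on cell {..<N}"
  proof (rule inj_onI, rule ccontr)
    fix j k assume j: "j \<in> {..<N}" and k: "k \<in> {..<N}" and eq: "cell j = cell k" and jk: "j \<noteq> k"
    have lt: "\<bar>\<Phi> i (pt j) - \<Phi> i (pt k)\<bar> < \<delta>" if "i < d" for i
    proof -
      have "\<lfloor>t j i\<rfloor> = \<lfloor>t k i\<rfloor>"
        using arg_cong[OF eq, of "\<lambda>xs. xs ! i"] that unfolding cell_def by simp
      then have "\<bar>t j i - t k i\<bar> < 1" by linarith
      moreover have "t j i - t k i = (\<Phi> i (pt j) - \<Phi> i (pt k)) / \<delta>"
        unfolding t_def using \<delta>0 by (simp add: field_simps)
      ultimately show ?thesis using \<delta>0 by (simp add: abs_divide)
    qed
    have "linf_dist d \<Phi> (pt j) (pt k) < \<delta>"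
      unfolding linf_dist_def using fin ne lt by (simp add: Max_less_iff)
    moreover have "pt j \<noteq> pt k" using jk Npos unfolding pt_def by simp
    then have "c1 * \<bar>pt j - pt k\<bar> powr \<alpha> \<le> linf_dist d \<Phi> (pt j) (pt k)"
      using H pt_in j k by auto
    moreover have "\<delta> \<le> c1 * \<bar>pt j - pt k\<bar> powr \<alpha>"
    proof -
      have "\<bar>real j - real k\<bar> \<ge> 1" using jk by linarith
      then have "1 / real N \<le> \<bar>pt j - pt k\<bar>" unfolding pt_def using Npos
        by (simp add: field_simps flip: diff_divide_distrib)
      then have "(1 / real N) powr \<alpha> \<le> \<bar>pt j - pt k\<bar> powr \<alpha>" using a0 Npos
        by (intro powr_mono2) auto
      moreover have "(1 / real N) powr \<alpha> = real N powr (- \<alpha>)"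
        using Npos by (simp add: powr_minus_divide powr_divide)
      ultimately show ?thesis unfolding \<delta>_def using c1 by simp
    qed
    ultimately show False by linarith
  qed
  have L0: "L \<ge> 0" unfolding L_def using A0 Npos by (simp add: add_pos_nonneg order.strict_trans2[OF _ mult_nonneg_nonneg] less_le_trans[of "-1" 0])
  have "N \<le> card S"
  proof -
    have "finite S" unfolding S_def by (rule finite_lists_length_eq) simp
    then show ?thesis using card_inj_on_le[OF inj sub] by simp
  qed
  also have "card S = nat (2*L+2) ^ d"
    unfolding S_def by (simp add: card_lists_length_eq add.commute)
  finally have "real N \<le> real (nat (2*L+2) ^ d)" by linarith
  also have "\<dots> = (of_int (2*L+2)) ^ d" using L0 by simp
  also have "\<dots> \<le> ((2*A+4) * real N powr \<alpha>) ^ d"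
  proof (rule power_mono)
    have "real N powr \<alpha> \<ge> 1" using N1 a0 by (intro ge_one_powr_ge_zero) auto
    moreover have "of_int L \<le> A * real N powr \<alpha> + 1" unfolding L_def by linarith
    ultimately show "of_int (2*L+2) \<le> (2*A+4) * real N powr \<alpha>" using A0 by (simp add: algebra_simps)
    show "0 \<le> (of_int (2*L+2) :: real)" using L0 by simp
  qed
  also have "\<dots> = B * real N powr (real d * \<alpha>)"
    unfolding B_def using Npos by (simp add: power_mult_distrib powr_realpow [symmetric] powr_powr mult.commute)
  also have "\<dots> < real N powr (1 - real d * \<alpha>) * real N powr (real d * \<alpha>)"
    using NB Npos by simp
  also have "\<dots> = real N" using Npos by (simp flip: powr_add)
  finally show False by simp
qed

theorem proposition2p2:
  fixes b d :: nat and \<alpha> :: real and g :: "nat \<Rightarrow> real \<Rightarrow> real"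
  assumes "b \<ge> 2" and "d \<ge> 1" and "0 < \<alpha>" and "\<alpha> < 1" and "real d < 1 / \<alpha>"
    and "\<forall>i<d. periodic1 (g i) \<and> (\<exists>C. C-lipschitz_on UNIV (g i))"
  shows "\<not> bi_holder \<alpha> d (weierstrass_embedding \<alpha> b g)"
proof -
  have "real d * \<alpha> < 1" using assms(3,5) by (simp add: field_simps)
  then show ?thesis using not_bi_holder_general assms(2,3) by blast
qed

end
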